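(* For every $k\ge0$, $$t_k=\sum_{n\ge0}\frac{(-1)^n}{n!}I_0^nI_{n+k},$$ $$s_k=\sum_{n\ge0}\sum_{i=0}^n\frac{(-1)^{n+1}I_0^iJ_0^{2n-2i+1}}{2^{n-i}\,i!\,(n-i)!\,(2n-2i+1)}I_{n+k+1}+\sum_{n\ge0}\frac{(-1)^n}{n!}\Big(I_0+\tfrac12J_0^2\Big)^nJ_{n+k}.$$ In particular the change of variables $(\mathbf t,\mathbf s)\mapsto(I_k,J_k)_{k\ge0}$ is invertible.
   Context: Let $\mathbf t=(t_0,t_1,\dots)$, $\mathbf s=(s_0,s_1,\dots)$ be formal variables and $\tilde t_n=t_n-\delta_{n,1}$. Let $v=v(\mathbf t)$ and $r=r(\mathbf t,\mathbf s)$ be the unique formal power series with $v(0)=0$, $r(0)=0$ solving the genus-zero Euler–Lagrange equations $\sum_{n\ge0}\tilde t_n\frac{v^n}{n!}=0$ and $\sum_{n\ge0}\tilde t_{n+1}\sum_{i=0}^n\frac{v^ir^{2n-2i+1}}{i!(2n-2i+1)!!}+\sum_{n\ge0}\frac{s_n}{n!}\big(v+\frac{r^2}2\big)^n=0$ (these are $v_{\rm top}=\partial_{t_0}^2\mathcal F^c_0$ and $r_{\rm top}=\partial_{t_0}\mathcal F^o_0$). Define the Itzykson–Zuber type variables $I_k=\sum_{n\ge0}t_{n+k}\frac{v^n}{n!}$, $J_k=\sum_{n\ge0}t_{n+k+1}\sum_{i=0}^n\frac{v^ir^{2n-2i+1}}{i!(2n-2i+1)!!}+\sum_{n\ge0}\frac{s_{n+k}}{n!}\big(v+\frac{r^2}2\big)^n$,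 $k\ge0$. (One has $I_0=v$, $J_0=r$.) *)

theory Defs
  imports Complex_Main "HOL-Library.Poly_Mapping"
begin

text \<open>Formal power series over the rationals in the countably many formal
variables t_0, t_1, ... and s_0, s_1, ...  A series is its coefficient function
on monomials (finitely supported exponent maps).\<close>

datatype var = T nat | S nat

type_synonym monom = "var \<Rightarrow>\<^sub>0 nat"
type_synonym mfps = "monom \<Rightarrow> rat"

definition mconst :: "rat \<Rightarrow> mfps" where
  "mconst c = (\<lambda>m. if m = 0 then c else 0)"

definition mvar :: "var \<Rightarrow> mfps" where
  "mvar x = (\<lambda>m. if m = Poly_Mapping.single x 1 then 1 else 0)"

definition madd :: "mfps \<Rightarrow> mfps \<Rightarrow> mfps" where
  "madd f g = (\<lambda>m. f m + g m)"

definition msub :: "mfps \<Rightarrow> mfps \<Rightarrow> mfps" where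
  "msub f g = (\<lambda>m. f m - g m)"

definition msc :: "rat \<Rightarrow> mfps \<Rightarrow> mfps" where
  "msc c f = (\<lambda>m. c * f m)"

text \<open>Cauchy product (the index set is finite for every monomial m).\<close>
definition mmul :: "mfps \<Rightarrow> mfps \<Rightarrow> mfps" where
  "mmul f g = (\<lambda>m. \<Sum>p\<in>{p. fst p + snd p = m}. f (fst p) * g (snd p))"

definition mpow :: "mfps \<Rightarrow> nat \<Rightarrow> mfps" where
  "mpow f n = (mmul f ^^ n) (mconst 1)"

definition mfsum :: "(nat \<Rightarrow> mfps) \<Rightarrow> nat set \<Rightarrow> mfps" where
  "mfsum F A = (\<lambda>m. \<Sum>i\<in>A. F i m)"

text \<open>Formal (adic) infinite sum: coefficientwise, summing over the indices
contributing a nonzero coefficient (a finite set for every formally summable family).\<close>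
definition msuminf :: "(nat \<Rightarrow> mfps) \<Rightarrow> mfps" where
  "msuminf F = (\<lambda>m. \<Sum>n\<in>{n. F n m \<noteq> 0}. F n m)"

fun dfact :: "nat \<Rightarrow> nat" where
  "dfact 0 = 1"
| "dfact (Suc 0) = 1"
| "dfact (Suc (Suc n)) = Suc (Suc n) * dfact n"

definition tt :: "nat \<Rightarrow> mfps" where
  "tt n = msub (mvar (T n)) (mconst (if n = 1 then 1 else 0))"

definition Bsum :: "nat \<Rightarrow> mfps \<Rightarrow> mfps \<Rightarrow> mfps" where
  "Bsum n v r = mfsum (\<lambda>i. msc (1 / (of_nat (fact i) * of_nat (dfact (2*n - 2*i + 1))))
                                 (mmul (mpow v i) (mpow r (2*n - 2*i + 1)))) {..n}"

definition wvr :: "mfps \<Rightarrow> mfps \<Rightarrow> mfps" where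
  "wvr v r = madd v (msc (1/2) (mpow r 2))"

definition EL_v :: "mfps \<Rightarrow> mfps" where
  "EL_v v = msuminf (\<lambda>n. msc (1 / of_nat (fact n)) (mmul (tt n) (mpow v n)))"

definition EL_r :: "mfps \<Rightarrow> mfps \<Rightarrow> mfps" where
  "EL_r v r = madd (msuminf (\<lambda>n. mmul (tt (n+1)) (Bsum n v r)))
                   (msuminf (\<lambda>n. msc (1 / of_nat (fact n)) (mmul (mvar (S n)) (mpow (wvr v r) n))))"

definition vtop :: mfps where
  "vtop = (THE v. v 0 = 0 \<and> EL_v v = mconst 0)"

definition rtop :: mfps where
  "rtop = (THE r. r 0 = 0 \<and> EL_r vtop r = mconst 0)"

definition II :: "nat \<Rightarrow> mfps" where
  "II k = msuminf (\<lambda>n. msc (1 / of_nat (fact n)) (mmul (mvar (T (n+k))) (mpow vtop n)))"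

definition JJ :: "nat \<Rightarrow> mfps" where
  "JJ k = madd (msuminf (\<lambda>n. mmul (mvar (T (n+k+1))) (Bsum n vtop rtop)))
               (msuminf (\<lambda>n. msc (1 / of_nat (fact n)) (mmul (mvar (S (n+k))) (mpow (wvr vtop rtop) n))))"

end

theory Submission
  imports Defs "HOL-Library.FuncSet" "HOL-Computational_Algebra.Formal_Power_Series"
begin


definition P :: "monom \<Rightarrow> (monom \<times> monom) set" where
  "P m = {p. fst p + snd p = m}"

lemma P_eq: "P m = (\<lambda>a. (a, m - a)) ` {a. \<exists>b. a + b = m}"
  unfolding P_def by (auto simp: image_iff)

lemma finite_below: "finite {a::monom. \<exists>b. a + b = m}"
proof -
  let ?S = "Pi\<^sub>E (Poly_Mapping.keys m) (\<lambda>k. {0..Poly_Mapping.lookup m k})"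
  have "finite ?S" by (rule finite_PiE) auto
  moreover have "inj_on (\<lambda>a. restrict (Poly_Mapping.lookup a) (Poly_Mapping.keys m)) {a::monom. \<exists>b. a + b = m}"
  proof (rule inj_onI)
    fix a a' assume a: "a \<in> {a::monom. \<exists>b. a + b = m}" and a': "a' \<in> {a::monom. \<exists>b. a + b = m}"
      and eq: "restrict (Poly_Mapping.lookup a) (Poly_Mapping.keys m) = restrict (Poly_Mapping.lookup a') (Poly_Mapping.keys m)"
    show "a = a'"
    proof (rule poly_mapping_eqI)
      fix k
      show "Poly_Mapping.lookup a k = Poly_Mapping.lookup a' k"
      proof (cases "k \<in> Poly_Mapping.keys m")
        case True then show ?thesis using eq by (metis restrict_apply')
      next
        case False
        then have "Poly_Mapping.lookup m k = 0" by (simp add: in_keys_iff)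
        from a obtain b where b: "a + b = m" by auto
        from a' obtain b' where b': "a' + b' = m" by auto
        have "Poly_Mapping.lookup a k = 0" using b \<open>Poly_Mapping.lookup m k = 0\<close>
          by (metis add_is_0 lookup_add)
        moreover have "Poly_Mapping.lookup a' k = 0" using b' \<open>Poly_Mapping.lookup m k = 0\<close>
          by (metis add_is_0 lookup_add)
        ultimately show ?thesis by simp
      qed
    qed
  qed
  moreover have "(\<lambda>a. restrict (Poly_Mapping.lookup a) (Poly_Mapping.keys m)) ` {a::monom. \<exists>b. a + b = m} \<subseteq> ?S"
  proof
    fix x assume "x \<in> (\<lambda>a. restrict (Poly_Mapping.lookup a) (Poly_Mapping.keys m)) ` {a::monom. \<exists>b. a + b = m}"
    then obtain a b where x: "x = restrict (Poly_Mapping.lookup a) (Poly_Mapping.keys m)" and ab: "a + b = m" by blast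
    have "\<And>k. Poly_Mapping.lookup a k \<le> Poly_Mapping.lookup m k" using ab by (auto simp: lookup_add)
    then show "x \<in> ?S" unfolding x by (simp add: PiE_iff)
  qed
  ultimately show ?thesis using finite_imageD finite_subset by blast
qed

lemma finite_P[simp]: "finite (P m)"
  unfolding P_eq using finite_below by simp

lemma mmul_P: "mmul f g = (\<lambda>m. \<Sum>p\<in>P m. f (fst p) * g (snd p))"
  unfolding mmul_def P_def ..

datatype mf = MF (coef: mfps)

lemma mf_eqI: "(\<And>m. coef a m = coef b m) \<Longrightarrow> a = b"
  by (cases a, cases b) auto

lemma MF_coef[simp]: "MF (coef a) = a" by (cases a) auto

instantiation mf :: comm_ring_1
begin
definition zero_mf_def: "0 = MF (\<lambda>m. 0)"
definition one_mf_def: "1 = MF (mconst 1)"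
definition plus_mf_def: "a + b = MF (madd (coef a) (coef b))"
definition minus_mf_def: "a - b = MF (msub (coef a) (coef b))"
definition uminus_mf_def: "- a = MF (\<lambda>m. - coef a m)"
definition times_mf_def: "a * b = MF (mmul (coef a) (coef b))"

lemma coef_zero[simp]: "coef 0 m = 0" by (simp add: zero_mf_def)
lemma coef_one: "coef 1 m = (if m = 0 then 1 else 0)" by (simp add: one_mf_def mconst_def)
lemma coef_add[simp]: "coef (a + b) m = coef a m + coef b m" by (simp add: plus_mf_def madd_def)
lemma coef_diff[simp]: "coef (a - b) m = coef a m - coef b m" by (simp add: minus_mf_def msub_def)
lemma coef_uminus[simp]: "coef (- a) m = - coef a m" by (simp add: uminus_mf_def)
lemma coef_mult: "coef (a * b) m = (\<Sum>p\<in>P m. coef a (fst p) * coef b (snd p))"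
  by (simp add: times_mf_def mmul_P)

lemma mult_assoc_aux: "(a * b) * c = a * (b * (c::mf))"
proof (rule mf_eqI)
  fix m
  have "coef ((a * b) * c) m = (\<Sum>p\<in>P m. \<Sum>q\<in>P (fst p). coef a (fst q) * coef b (snd q) * coef c (snd p))"
    by (simp add: coef_mult sum_distrib_right)
  also have "\<dots> = (\<Sum>x\<in>Sigma (P m) (\<lambda>p. P (fst p)). coef a (fst (snd x)) * coef b (snd (snd x)) * coef c (snd (fst x)))"
    by (subst sum.Sigma) (auto simp: split_beta)
  also have "\<dots> = (\<Sum>x\<in>Sigma (P m) (\<lambda>p. P (snd p)). coef a (fst (fst x)) * coef b (fst (snd x)) * coef c (snd (snd x)))"
    apply (rule sum.reindex_bij_witness[where i="\<lambda>((u,y),(v,z)). ((u+v, z),(u,v))" and j="\<lambda>((x,z),(u,v)). ((u, v+z),(v,z))"])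
    by (auto simp: P_def add.assoc)
  also have "\<dots> = (\<Sum>p\<in>P m. \<Sum>q\<in>P (snd p). coef a (fst p) * (coef b (fst q) * coef c (snd q)))"
    by (subst sum.Sigma) (auto simp: mult.assoc split_beta)
  also have "\<dots> = coef (a * (b * c)) m"
    by (simp add: coef_mult sum_distrib_left)
  finally show "coef ((a * b) * c) m = coef (a * (b * c)) m" .
qed

lemma mult_comm_aux: "a * b = b * (a::mf)"
proof (rule mf_eqI)
  fix m show "coef (a * b) m = coef (b * a) m"
    unfolding coef_mult
    by (rule sum.reindex_bij_witness[where i=prod.swap and j=prod.swap]) (auto simp: P_def add.commute)
qed

lemma one_mult_aux: "1 * a = (a::mf)"
proof (rule mf_eqI)
  fix m
  have "coef (1 * a) m = (\<Sum>p\<in>P m. if fst p = 0 then coef a (snd p) else 0)"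
    unfolding coef_mult by (rule sum.cong) (auto simp: coef_one)
  also have "\<dots> = (\<Sum>p\<in>{p \<in> P m. fst p = 0}. coef a (snd p))"
    by (simp add: sum.inter_filter)
  also have "{p \<in> P m. fst p = 0} = {(0, m)}" by (auto simp: P_def)
  finally show "coef (1 * a) m = coef a m" by simp
qed

lemma distrib_aux: "(a + b) * c = a * c + b * (c::mf)"
  by (rule mf_eqI) (simp add: coef_mult ring_distribs sum.distrib)

instance
proof
  fix a b c :: mf
  show "a + b + c = a + (b + c)" by (rule mf_eqI) simp
  show "a + b = b + a" by (rule mf_eqI) simp
  show "0 + a = a" by (rule mf_eqI) simp
  show "- a + a = 0" by (rule mf_eqI) simp
  show "a - b = a + - b" by (rule mf_eqI) simp
  show "a * b * c = a * (b * c)" by (rule mult_assoc_aux)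
  show "a * b = b * a" by (rule mult_comm_aux)
  show "1 * a = a" by (rule one_mult_aux)
  show "(a + b) * c = a * c + b * c" by (rule distrib_aux)
  show "(0::mf) \<noteq> 1" by (simp add: zero_mf_def one_mf_def mconst_def fun_eq_iff)
qed
end


definition deg :: "monom \<Rightarrow> nat" where
  "deg m = (\<Sum>k\<in>Poly_Mapping.keys m. Poly_Mapping.lookup m k)"

lemma deg_add: "deg (p + q) = deg p + deg q"
  unfolding deg_def by (rule setsum_keys_plus_distrib) auto

lemma deg_zero[simp]: "deg 0 = 0" by (simp add: deg_def)

lemma deg_eq_0: assumes "deg m = 0" shows "m = 0"
proof -
  have "\<forall>k\<in>Poly_Mapping.keys m. Poly_Mapping.lookup m k = 0"
    using assms unfolding deg_def by (simp add: sum_eq_0_iff)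
  then have "\<And>k. Poly_Mapping.lookup m k = 0" by (metis in_keys_iff)
  then show ?thesis by (intro poly_mapping_eqI) simp
qed

lemma deg_single: "deg (Poly_Mapping.single x 1) = 1" by (simp add: deg_def)

lemma P_deg: "p \<in> P m \<Longrightarrow> deg (fst p) + deg (snd p) = deg m"
  by (auto simp: P_def deg_add[symmetric])

definition VB :: "mf \<Rightarrow> nat \<Rightarrow> bool" where
  "VB f d \<longleftrightarrow> (\<forall>m. deg m < d \<longrightarrow> coef f m = 0)"

lemma VB_0[simp]: "VB f 0" by (simp add: VB_def)
lemma VB_zero[simp]: "VB 0 d" by (simp add: VB_def)
lemma VB_mono: "VB f d \<Longrightarrow> e \<le> d \<Longrightarrow> VB f e" by (auto simp: VB_def)
lemma VB_add: "VB f d \<Longrightarrow> VB g d \<Longrightarrow> VB (f + g) d" by (auto simp: VB_def)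
lemma VB_diff: "VB f d \<Longrightarrow> VB g d \<Longrightarrow> VB (f - g) d" by (auto simp: VB_def)
lemma VB_uminus: "VB f d \<Longrightarrow> VB (- f) d" by (auto simp: VB_def)
lemma VB_sum: "(\<And>i. i \<in> A \<Longrightarrow> VB (F i) d) \<Longrightarrow> VB (sum F A) d"
  by (induction A rule: infinite_finite_induct) (auto intro: VB_add)

lemma VB_mult: "VB f i \<Longrightarrow> VB g j \<Longrightarrow> VB (f * g) (i + j)"
  unfolding VB_def coef_mult
proof (intro allI impI sum.neutral ballI)
  fix m p assume f: "\<forall>m. deg m < i \<longrightarrow> coef f m = 0" and g: "\<forall>m. deg m < j \<longrightarrow> coef g m = 0"
    and m: "deg m < i + j" and p: "p \<in> P m"
  from P_deg[OF p] m have "deg (fst p) < i \<or> deg (snd p) < j" by linarith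
  with f g show "coef f (fst p) * coef g (snd p) = 0" by auto
qed

lemma VB_mult': "VB f i \<Longrightarrow> VB g j \<Longrightarrow> d \<le> i + j \<Longrightarrow> VB (f * g) d"
  using VB_mult VB_mono by blast

lemma VB_power: "VB f 1 \<Longrightarrow> VB (f ^ n) n"
proof (induction n)
  case (Suc n) then show ?case using VB_mult[of f 1 "f ^ n" n] by simp
qed simp

lemma VB_power_diff: "VB (a - b) d \<Longrightarrow> VB (a ^ n - b ^ n) d"
proof (induction n)
  case (Suc n)
  have "a ^ Suc n - b ^ Suc n = a * (a ^ n - b ^ n) + (a - b) * b ^ n"
    by (simp add: algebra_simps)
  moreover have "VB (a * (a ^ n - b ^ n)) d" using VB_mult[OF VB_0 Suc.IH[OF Suc.prems]] by simp
  moreover have "VB ((a - b) * b ^ n) d" using VB_mult[OF Suc.prems VB_0] by simp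
  ultimately show ?case by (simp add: VB_add)
qed simp

lemma VB_eq: "(\<And>d. VB (a - b) d) \<Longrightarrow> a = b"
proof (rule mf_eqI)
  fix m assume "\<And>d. VB (a - b) d"
  then have "VB (a - b) (Suc (deg m))" .
  then show "coef a m = coef b m" by (auto simp: VB_def)
qed

definition C :: "rat \<Rightarrow> mf" where "C c = MF (mconst c)"
definition X :: "var \<Rightarrow> mf" where "X v = MF (mvar v)"

lemma coef_C: "coef (C c) m = (if m = 0 then c else 0)" by (simp add: C_def mconst_def)

lemma coef_C_mult: "coef (C c * f) m = c * coef f m"
proof -
  have "coef (C c * f) m = (\<Sum>p\<in>P m. if fst p = 0 then c * coef f (snd p) else 0)"
    unfolding coef_mult by (rule sum.cong) (auto simp: coef_C)
  also have "\<dots> = (\<Sum>p\<in>{p \<in> P m. fst p = 0}. c * coef f (snd p))"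
    by (simp add: sum.inter_filter)
  also have "{p \<in> P m. fst p = 0} = {(0, m)}" by (auto simp: P_def)
  finally show ?thesis by simp
qed

lemma C_mult: "C (a * b) = C a * C b"
  by (rule mf_eqI) (simp add: coef_C_mult coef_C)
lemma C_add: "C (a + b) = C a + C b" by (rule mf_eqI) (simp add: coef_C)
lemma C_diff: "C (a - b) = C a - C b" by (rule mf_eqI) (simp add: coef_C)
lemma C_uminus: "C (- a) = - C a" by (rule mf_eqI) (simp add: coef_C)
lemma C_0[simp]: "C 0 = 0" by (rule mf_eqI) (simp add: coef_C)
lemma C_1[simp]: "C 1 = 1" by (rule mf_eqI) (simp add: coef_C coef_one)
lemma C_power: "C (a ^ n) = C a ^ n" by (induction n) (simp_all add: C_mult)
lemma C_of_nat: "C (of_nat n) = of_nat n" by (induction n) (simp_all add: C_add)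
lemma C_sum: "C (sum f A) = (\<Sum>i\<in>A. C (f i))"
  by (induction A rule: infinite_finite_induct) (simp_all add: C_add)

lemma VB_C_mult: "VB f d \<Longrightarrow> VB (C c * f) d" by (simp add: VB_def coef_C_mult)

lemma VB_X: "VB (X v) 1"
  by (auto simp: VB_def X_def mvar_def deg_def)

lemma coef_sum: "coef (sum F A) m = (\<Sum>i\<in>A. coef (F i) m)"
  by (induction A rule: infinite_finite_induct) simp_all

definition SI :: "(nat \<Rightarrow> mf) \<Rightarrow> mf" where
  "SI F = MF (\<lambda>m. \<Sum>n\<le>deg m. coef (F n) m)"

definition summ :: "(nat \<Rightarrow> mf) \<Rightarrow> bool" where
  "summ F \<longleftrightarrow> (\<forall>n. VB (F n) n)"

lemma coef_SI: "coef (SI F) m = (\<Sum>n\<le>deg m. coef (F n) m)" by (simp add: SI_def)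

lemma coef_SI_ge: assumes "summ F" "deg m \<le> N"
  shows "coef (SI F) m = (\<Sum>n\<le>N. coef (F n) m)"
  unfolding coef_SI
  by (rule sum.mono_neutral_left) (use assms in \<open>auto simp: summ_def VB_def\<close>)

lemma msuminf_SI: assumes "summ F" shows "msuminf (\<lambda>n. coef (F n)) = coef (SI F)"
proof
  fix m
  have "msuminf (\<lambda>n. coef (F n)) m = (\<Sum>n\<in>{n. coef (F n) m \<noteq> 0}. coef (F n) m)"
    by (simp add: msuminf_def)
  also have "\<dots> = (\<Sum>n\<le>deg m. coef (F n) m)"
    by (rule sum.mono_neutral_left) (use assms in \<open>auto simp: summ_def VB_def not_le[symmetric]\<close>)
  finally show "msuminf (\<lambda>n. coef (F n)) m = coef (SI F) m" by (simp add: coef_SI)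
qed

lemma SI_add: "SI (\<lambda>n. F n + G n) = SI F + SI G"
  by (rule mf_eqI) (simp add: coef_SI sum.distrib)
lemma SI_diff: "SI (\<lambda>n. F n - G n) = SI F - SI G"
  by (rule mf_eqI) (simp add: coef_SI sum_subtractf)
lemma SI_zero: "SI (\<lambda>n. 0) = 0"
  by (rule mf_eqI) (simp add: coef_SI)
lemma VB_SI: "(\<And>n. VB (F n) d) \<Longrightarrow> VB (SI F) d"
  by (auto simp: VB_def coef_SI)

lemma summ_add: "summ F \<Longrightarrow> summ G \<Longrightarrow> summ (\<lambda>n. F n + G n)"
  by (simp add: summ_def VB_add)

lemma SI_mult_left: assumes "summ F" shows "a * SI F = SI (\<lambda>n. a * F n)"
proof (rule mf_eqI)
  fix m
  have "coef (a * SI F) m = (\<Sum>p\<in>P m. coef a (fst p) * (\<Sum>n\<le>deg m. coef (F n) (snd p)))"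
    unfolding coef_mult
  proof (rule sum.cong)
    fix p assume p: "p \<in> P m"
    then have "deg (snd p) \<le> deg m" using P_deg[OF p] by linarith
    then show "coef a (fst p) * coef (SI F) (snd p) = coef a (fst p) * (\<Sum>n\<le>deg m. coef (F n) (snd p))"
      using coef_SI_ge[OF assms] by simp
  qed simp
  also have "\<dots> = (\<Sum>n\<le>deg m. \<Sum>p\<in>P m. coef a (fst p) * coef (F n) (snd p))"
    by (simp add: sum_distrib_left sum.swap[of _ "P m"])
  also have "\<dots> = coef (SI (\<lambda>n. a * F n)) m"
    by (simp add: coef_SI coef_mult)
  finally show "coef (a * SI F) m = coef (SI (\<lambda>n. a * F n)) m" .
qed

lemma SI_mult_right: assumes "summ F" shows "SI F * a = SI (\<lambda>n. F n * a)"
  using SI_mult_left[OF assms, of a] by (simp add: mult.commute)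

lemma SI_single: assumes "VB a j" shows "SI (\<lambda>n. if n = j then a else 0) = a"
proof (rule mf_eqI)
  fix m show "coef (SI (\<lambda>n. if n = j then a else 0)) m = coef a m"
  proof (cases "j \<le> deg m")
    case True
    have "\<And>n. coef (if n = j then a else 0) m = (if n = j then coef a m else 0)" by simp
    with True show ?thesis by (simp add: coef_SI)
  next
    case False then show ?thesis using assms by (simp add: coef_SI VB_def)
  qed
qed

lemma SI_double:
  assumes H: "\<And>n j. VB (H n j) (n + j)"
  shows "SI (\<lambda>n. SI (\<lambda>j. H n j)) = SI (\<lambda>N. \<Sum>n\<le>N. H n (N - n))"
proof (rule mf_eqI)
  fix m
  let ?D = "deg m"
  have sj: "summ (\<lambda>j. H n j)" for n unfolding summ_def by (metis VB_mono H le_add2)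
  have "coef (SI (\<lambda>n. SI (\<lambda>j. H n j))) m = (\<Sum>n\<le>?D. \<Sum>j\<le>?D. coef (H n j) m)"
    by (simp add: coef_SI coef_SI_ge[OF sj])
  also have "\<dots> = (\<Sum>(n,j)\<in>{..?D} \<times> {..?D}. coef (H n j) m)"
    by (simp add: sum.cartesian_product)
  also have "\<dots> = (\<Sum>(n,j)\<in>{(n,j). n + j \<le> ?D}. coef (H n j) m)"
    by (rule sum.mono_neutral_right) (auto, meson H VB_def not_le)
  also have "\<dots> = (\<Sum>N\<le>?D. \<Sum>n\<le>N. coef (H n (N - n)) m)"
    by (rule sum.triangle_reindex_eq)
  also have "\<dots> = coef (SI (\<lambda>N. \<Sum>n\<le>N. H n (N - n))) m"
    by (simp add: coef_SI coef_sum)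
  finally show "coef (SI (\<lambda>n. SI (\<lambda>j. H n j))) m = coef (SI (\<lambda>N. \<Sum>n\<le>N. H n (N - n))) m" .
qed


lemma fixpoint:
  assumes map: "\<And>a. VB a 1 \<Longrightarrow> VB (\<Phi> a) 1"
    and contr: "\<And>a b d. VB a 1 \<Longrightarrow> VB b 1 \<Longrightarrow> VB (a - b) d \<Longrightarrow> VB (\<Phi> a - \<Phi> b) (Suc d)"
  shows "\<exists>!v. VB v 1 \<and> \<Phi> v = v"
proof -
  define it where "it j = (\<Phi> ^^ j) 0" for j
  have itS: "it (Suc j) = \<Phi> (it j)" for j by (simp add: it_def)
  have it1: "VB (it j) 1" for j
  proof (induction j)
    case 0 show ?case by (simp add: it_def)
  next
    case (Suc j) show ?case unfolding itS by (rule map[OF Suc.IH])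
  qed
  have step: "VB (it (Suc j) - it j) j" for j
  proof (induction j)
    case (Suc j) then show ?case using contr[OF it1 it1, of "Suc j" j j] by (simp add: itS)
  qed simp
  have far: "VB (it (j + i) - it j) j" for i j
  proof (induction i)
    case (Suc i)
    have "it (j + Suc i) - it j = (it (Suc (j+i)) - it (j+i)) + (it (j+i) - it j)" by simp
    moreover have "VB (it (Suc (j+i)) - it (j+i)) j" using step VB_mono le_add1 by blast
    ultimately show ?case using Suc VB_add by metis
  qed simp
  have agree: "coef (it i) m = coef (it j) m" if "j \<le> i" "deg m < j" for i j m
    using far[of j "i - j"] that by (simp add: VB_def)
  define v where "v = MF (\<lambda>m. coef (it (Suc (deg m))) m)"
  have vj: "VB (v - it j) j" for j
    unfolding VB_def v_def
  proof (intro allI impI)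
    fix m assume "deg m < j"
    then show "coef (MF (\<lambda>m. coef (it (Suc (deg m))) m) - it j) m = 0"
      using agree[of "Suc (deg m)" j m] by simp
  qed
  have v1: "VB v 1"
    using it1 unfolding VB_def v_def by simp
  have vfix: "\<Phi> v = v"
  proof (rule mf_eqI)
    fix m
    define d where "d = deg m"
    have "VB (\<Phi> v - \<Phi> (it (Suc d))) (Suc (Suc d))" using contr[OF v1 it1 vj] .
    then have "coef (\<Phi> v) m = coef (it (Suc (Suc d))) m" by (simp add: VB_def d_def itS)
    also have "\<dots> = coef (it (Suc d)) m" using agree[of "Suc d" "Suc (Suc d)" m] by (simp add: d_def)
    also have "\<dots> = coef v m" by (simp add: v_def d_def)
    finally show "coef (\<Phi> v) m = coef v m" .
  qed
  show ?thesis
  proof (rule ex1I[of _ v])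
    show "VB v 1 \<and> \<Phi> v = v" using v1 vfix by simp
  next
    fix w assume w: "VB w 1 \<and> \<Phi> w = w"
    have "VB (w - v) d" for d
    proof (induction d)
      case (Suc d) then show ?case using contr[of w v d] w v1 vfix by simp
    qed simp
    then show "w = v" by (rule VB_eq)
  qed
qed

lemma madd_tr: "madd f g = coef (MF f + MF g)" by (simp add: plus_mf_def)
lemma msub_tr: "msub f g = coef (MF f - MF g)" by (simp add: minus_mf_def)
lemma mmul_tr: "mmul f g = coef (MF f * MF g)" by (simp add: times_mf_def)
lemma msc_tr: "msc c f = coef (C c * MF f)" by (rule ext) (simp add: coef_C_mult msc_def)
lemma mconst_tr: "mconst c = coef (C c)" by (simp add: C_def)
lemma mvar_tr: "mvar v = coef (X v)" by (simp add: X_def)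
lemma mpow_tr: "mpow f n = coef (MF f ^ n)"
  by (induction n) (simp_all add: mpow_def one_mf_def mmul_tr)
lemma mfsum_tr: "mfsum F A = coef (\<Sum>i\<in>A. MF (F i))"
  by (rule ext) (simp add: mfsum_def coef_sum)

lemmas tr = madd_tr msub_tr mmul_tr msc_tr mconst_tr mvar_tr mpow_tr mfsum_tr

lemma coef_inj: "coef a = coef b \<Longrightarrow> a = b" by (rule mf_eqI) simp

definition Phi :: "mf \<Rightarrow> mf" where
  "Phi a = SI (\<lambda>n. C (1 / of_nat (fact n)) * (X (T n) * a ^ n))"

definition Bs :: "nat \<Rightarrow> mf \<Rightarrow> mf \<Rightarrow> mf" where
  "Bs n v r = (\<Sum>i\<in>{..n}. C (1 / (of_nat (fact i) * of_nat (dfact (2*n - 2*i + 1)))) *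
                                 (v ^ i * r ^ (2*n - 2*i + 1)))"

definition W :: "mf \<Rightarrow> mf \<Rightarrow> mf" where
  "W v r = v + C (1/2) * r ^ 2"

definition Psi :: "mf \<Rightarrow> mf \<Rightarrow> mf" where
  "Psi v r = SI (\<lambda>n. X (T (n+1)) * Bs n v r) + SI (\<lambda>n. C (1 / of_nat (fact n)) * (X (S n) * W v r ^ n))"

lemma Bsum_tr: "Bsum n (coef v) (coef r) = coef (Bs n v r)"
  by (simp add: Bsum_def Bs_def tr)

lemma wvr_tr: "wvr (coef v) (coef r) = coef (W v r)"
  by (simp add: wvr_def W_def tr)

lemma VB_Bs: assumes "VB v 1" "VB r 1" shows "VB (Bs n v r) (Suc n)"
  unfolding Bs_def
proof (rule VB_sum)
  fix i assume "i \<in> {..n}"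
  then have "Suc n \<le> i + (2*n - 2*i + 1)" by auto
  then show "VB (C (1 / (of_nat (fact i) * of_nat (dfact (2*n - 2*i + 1)))) * (v ^ i * r ^ (2*n - 2*i + 1))) (Suc n)"
    by (intro VB_C_mult VB_mult'[OF VB_power[OF assms(1)] VB_power[OF assms(2)]])
qed

lemma VB_W: assumes "VB v 1" "VB r 1" shows "VB (W v r) 1"
proof -
  have "VB (r^2) 2" by (rule VB_power[OF assms(2)])
  then have "VB (r^2) 1" by (rule VB_mono) simp
  then show ?thesis unfolding W_def by (intro VB_add VB_C_mult assms)
qed

lemma summ_Phi: "VB a 1 \<Longrightarrow> summ (\<lambda>n. C (1 / of_nat (fact n)) * (X (T (n + k)) * a ^ n))"
  unfolding summ_def by (intro allI VB_C_mult VB_mult'[OF VB_X VB_power]) auto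

lemma Bs_0: "Bs 0 v r = r" by (simp add: Bs_def)

lemma EL_v_tr: assumes v: "VB v 1" shows "EL_v (coef v) = coef (Phi v - v)"
proof -
  have "EL_v (coef v) = msuminf (\<lambda>n. coef (C (1 / of_nat (fact n)) * ((X (T n) - C (if n = 1 then 1 else 0)) * v ^ n)))"
    by (simp add: EL_v_def tt_def tr)
  also have "\<dots> = coef (SI (\<lambda>n. C (1 / of_nat (fact n)) * ((X (T n) - C (if n = 1 then 1 else 0)) * v ^ n)))"
    by (rule msuminf_SI) (unfold summ_def, intro allI VB_C_mult VB_mult'[OF VB_0 VB_power[OF v]], simp)
  also have "SI (\<lambda>n. C (1 / of_nat (fact n)) * ((X (T n) - C (if n = 1 then 1 else 0)) * v ^ n)) =
     SI (\<lambda>n. C (1 / of_nat (fact n)) * (X (T n) * v ^ n) - (if n = 1 then v else 0))"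
    by (rule arg_cong[where f=SI]) (auto simp: algebra_simps)
  also have "\<dots> = Phi v - v" using SI_single[OF v] by (simp add: SI_diff Phi_def)
  finally show ?thesis .
qed


lemma EL_r_tr: assumes v: "VB v 1" and r: "VB r 1"
  shows "EL_r (coef v) (coef r) = coef (Psi v r - r)"
proof -
  let ?F = "\<lambda>n. (X (T (n+1)) - C (if n + 1 = 1 then 1 else 0)) * Bs n v r"
  let ?G = "\<lambda>n. C (1 / of_nat (fact n)) * (X (S n) * W v r ^ n)"
  have sF: "summ ?F" unfolding summ_def by (intro allI VB_mult'[OF VB_0 VB_Bs[OF v r]]) simp
  have sG: "summ ?G" unfolding summ_def
    by (intro allI VB_C_mult VB_mult'[OF VB_0 VB_power[OF VB_W[OF v r]]]) simp
  have "EL_r (coef v) (coef r) = madd (msuminf (\<lambda>n. coef (?F n))) (msuminf (\<lambda>n. coef (?G n)))"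
    by (simp add: EL_r_def tt_def tr Bsum_tr wvr_tr)
  also have "\<dots> = coef (SI ?F + SI ?G)" by (simp only: msuminf_SI[OF sF] msuminf_SI[OF sG] madd_tr MF_coef)
  also have "SI ?F = SI (\<lambda>n. X (T (n+1)) * Bs n v r - (if n = 0 then r else 0))"
    by (rule arg_cong[where f=SI]) (auto simp: algebra_simps Bs_0)
  also have "\<dots> = SI (\<lambda>n. X (T (n+1)) * Bs n v r) - r"
    using SI_single[of r 0] by (simp add: SI_diff)
  also have "SI (\<lambda>n. X (T (n+1)) * Bs n v r) - r + SI ?G = Psi v r - r"
    unfolding Psi_def by (simp add: algebra_simps)
  finally show ?thesis .
qed

lemma Phi_map: "VB a 1 \<Longrightarrow> VB (Phi a) 1"
  unfolding Phi_def by (intro VB_SI VB_C_mult VB_mult'[OF VB_X VB_0]) simp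

lemma Phi_contr: assumes "VB (a - b) d" shows "VB (Phi a - Phi b) (Suc d)"
proof -
  have "Phi a - Phi b = SI (\<lambda>n. C (1 / of_nat (fact n)) * (X (T n) * (a ^ n - b ^ n)))"
    unfolding Phi_def SI_diff[symmetric] by (simp add: algebra_simps)
  also have "VB \<dots> (Suc d)"
    by (intro VB_SI VB_C_mult VB_mult'[OF VB_X VB_power_diff[OF assms]]) simp
  finally show ?thesis .
qed

lemma Bs_diff: assumes "VB (a - b) d" shows "VB (Bs n v a - Bs n v b) d"
proof -
  have "Bs n v a - Bs n v b = (\<Sum>i\<in>{..n}. C (1 / (of_nat (fact i) * of_nat (dfact (2*n - 2*i + 1)))) *
                                 (v ^ i * (a ^ (2*n - 2*i + 1) - b ^ (2*n - 2*i + 1))))"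
    unfolding Bs_def sum_subtractf[symmetric] by (simp add: algebra_simps)
  also have "VB \<dots> d"
    by (intro VB_sum VB_C_mult VB_mult'[OF VB_0 VB_power_diff[OF assms]]) simp
  finally show ?thesis .
qed

lemma W_diff: assumes "VB (a - b) d" shows "VB (W v a ^ n - W v b ^ n) d"
proof -
  have "W v a - W v b = C (1/2) * (a ^ 2 - b ^ 2)" by (simp add: W_def algebra_simps)
  also have "VB \<dots> d" by (intro VB_C_mult VB_power_diff assms)
  finally show ?thesis by (rule VB_power_diff)
qed

lemma Psi_map: "VB a 1 \<Longrightarrow> VB (Psi v a) 1"
  unfolding Psi_def
  by (intro VB_add VB_SI VB_C_mult VB_mult'[OF VB_X VB_0]) simp_all

lemma Psi_contr: assumes "VB (a - b) d" shows "VB (Psi v a - Psi v b) (Suc d)"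
proof -
  have "Psi v a - Psi v b = SI (\<lambda>n. X (T (n+1)) * (Bs n v a - Bs n v b)) +
     SI (\<lambda>n. C (1 / of_nat (fact n)) * (X (S n) * (W v a ^ n - W v b ^ n)))"
    unfolding Psi_def SI_diff[symmetric] SI_add[symmetric] by (simp add: algebra_simps SI_diff[symmetric])
  also have "VB \<dots> (Suc d)"
    by (intro VB_add VB_SI VB_C_mult VB_mult'[OF VB_X Bs_diff[OF assms]] VB_mult'[OF VB_X W_diff[OF assms]]) simp_all
  finally show ?thesis .
qed

definition V :: mf where "V = (THE v. VB v 1 \<and> Phi v = v)"

lemma V_ex1: "\<exists>!v. VB v 1 \<and> Phi v = v"
  by (rule fixpoint[OF Phi_map Phi_contr])

lemma V: "VB V 1" "Phi V = V"
  using theI'[OF V_ex1] unfolding V_def[symmetric] by auto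

definition R :: mf where "R = (THE r. VB r 1 \<and> Psi V r = r)"

lemma R_ex1: "\<exists>!r. VB r 1 \<and> Psi V r = r"
  by (rule fixpoint[OF Psi_map Psi_contr])

lemma R: "VB R 1" "Psi V R = R"
  using theI'[OF R_ex1] unfolding R_def[symmetric] by auto

lemma VB1_MF: "f 0 = 0 \<Longrightarrow> VB (MF f) 1"
  by (auto simp: VB_def dest: deg_eq_0)

lemma vtop_eq: "vtop = coef V"
  unfolding vtop_def
proof (rule the_equality)
  show "coef V 0 = 0 \<and> EL_v (coef V) = mconst 0"
    using V by (auto simp: VB_def EL_v_tr mconst_tr)
next
  fix f assume f: "f 0 = 0 \<and> EL_v f = mconst 0"
  have a: "VB (MF f) 1" using f VB1_MF by blast
  have "coef (Phi (MF f) - MF f) = coef 0"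
    using f EL_v_tr[OF a] by (simp add: mconst_tr)
  then have "Phi (MF f) = MF f" by (metis coef_inj eq_iff_diff_eq_0)
  with a V V_ex1 have "MF f = V" by blast
  then have "coef (MF f) = coef V" by simp
  then show "f = coef V" by simp
qed

lemma rtop_eq: "rtop = coef R"
  unfolding rtop_def vtop_eq
proof (rule the_equality)
  show "coef R 0 = 0 \<and> EL_r (coef V) (coef R) = mconst 0"
    using V R by (auto simp: VB_def EL_r_tr mconst_tr)
next
  fix f assume f: "f 0 = 0 \<and> EL_r (coef V) f = mconst 0"
  have a: "VB (MF f) 1" using f VB1_MF by blast
  have "coef (Psi V (MF f) - MF f) = coef 0"
    using f EL_r_tr[OF V(1) a] by (simp add: mconst_tr)
  then have "Psi V (MF f) = MF f" by (metis coef_inj eq_iff_diff_eq_0)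
  with a R R_ex1 have "MF f = R" by blast
  then have "coef (MF f) = coef R" by simp
  then show "f = coef R" by simp
qed

definition Ik :: "nat \<Rightarrow> mf" where
  "Ik k = SI (\<lambda>n. C (1 / of_nat (fact n)) * (X (T (n+k)) * V ^ n))"

definition Jk :: "nat \<Rightarrow> mf" where
  "Jk k = SI (\<lambda>n. X (T (n+k+1)) * Bs n V R) + SI (\<lambda>n. C (1 / of_nat (fact n)) * (X (S (n+k)) * W V R ^ n))"

lemma II_tr: "II k = coef (Ik k)"
proof -
  have "II k = msuminf (\<lambda>n. coef (C (1 / of_nat (fact n)) * (X (T (n+k)) * V ^ n)))"
    by (simp add: II_def tr vtop_eq)
  also have "\<dots> = coef (Ik k)" unfolding Ik_def by (rule msuminf_SI[OF summ_Phi[OF V(1)]])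
  finally show ?thesis .
qed

lemma JJ_tr: "JJ k = coef (Jk k)"
proof -
  let ?F = "\<lambda>n. X (T (n+k+1)) * Bs n V R"
  let ?G = "\<lambda>n. C (1 / of_nat (fact n)) * (X (S (n+k)) * W V R ^ n)"
  have sF: "summ ?F" unfolding summ_def by (intro allI VB_mult'[OF VB_0 VB_Bs[OF V(1) R(1)]]) simp
  have sG: "summ ?G" unfolding summ_def
    by (intro allI VB_C_mult VB_mult'[OF VB_0 VB_power[OF VB_W[OF V(1) R(1)]]]) simp
  have "JJ k = madd (msuminf (\<lambda>n. coef (?F n))) (msuminf (\<lambda>n. coef (?G n)))"
    by (simp add: JJ_def tr vtop_eq rtop_eq Bsum_tr wvr_tr)
  also have "\<dots> = coef (Jk k)" by (simp only: msuminf_SI[OF sF] msuminf_SI[OF sG] madd_tr MF_coef Jk_def)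
  finally show ?thesis .
qed

lemma Ik0: "Ik 0 = V" using V(2) by (simp add: Ik_def Phi_def)
lemma Jk0: "Jk 0 = R" using R(2) by (simp add: Jk_def Psi_def)


definition E :: "mf \<Rightarrow> mf fps" where
  "E a = Abs_fps (\<lambda>n. C (1 / fact n) * a ^ n)"

lemma C_fact_binom: assumes "k \<le> N"
  shows "C (1 / fact N) * of_nat (N choose k) = C (1 / fact k) * C (1 / fact (N - k))"
proof -
  have "(1 / fact N) * (of_nat (N choose k) :: rat) = (1 / fact k) * (1 / fact (N - k))"
    using assms by (simp add: binomial_fact field_simps)
  note eq = this
  have "C (1 / fact N) * of_nat (N choose k) = C ((1/fact N) * of_nat (N choose k))" by (simp only: C_mult C_of_nat)
  also have "\<dots> = C ((1/fact k) * (1/fact (N-k)))" by (simp only: eq)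
  also have "\<dots> = C (1/fact k) * C (1/fact (N-k))" by (simp only: C_mult)
  finally show ?thesis .
qed

lemma E_mult: "E a * E b = E (a + b)"
proof (rule fps_ext)
  fix N
  have "fps_nth (E a * E b) N = (\<Sum>i\<le>N. C (1 / fact i) * a ^ i * (C (1 / fact (N - i)) * b ^ (N - i)))"
    by (simp add: fps_mult_nth E_def atLeast0AtMost)
  also have "\<dots> = (\<Sum>i\<le>N. C (1 / fact N) * (of_nat (N choose i) * a ^ i * b ^ (N - i)))"
    by (rule sum.cong) (auto simp: C_fact_binom[symmetric] algebra_simps)
  also have "\<dots> = fps_nth (E (a + b)) N"
    by (simp add: E_def binomial_ring sum_distrib_left)
  finally show "fps_nth (E a * E b) N = fps_nth (E (a + b)) N" .
qed

lemma E_0: "E 0 = 1"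
  by (rule fps_ext) (simp add: E_def power_0_left)

lemma E_inv: "E (- a) * E a = 1"
  by (simp add: E_mult E_0)

lemma C_sign: "C ((-1) ^ n / fact n) * a ^ n = C (1 / fact n) * (- a) ^ n"
proof -
  have "C ((-1) ^ n / fact n) = C (((- 1) ^ n) * (1 / fact n))" by simp
  also have "\<dots> = (-1) ^ n * C (1 / fact n)" by (simp only: C_mult C_power C_uminus C_1)
  finally have "C ((-1) ^ n / fact n) = (-1) ^ n * C (1 / fact n)" .
  then show ?thesis by (simp add: power_minus[of a])
qed

lemma summ_Ik: "summ (\<lambda>j. C (1 / fact j) * (X (T (j + k)) * V ^ j))"
  using summ_Phi[OF V(1), of k] by simp

lemma Ik_alt: "Ik k = SI (\<lambda>n. C (1 / fact n) * (X (T (n + k)) * V ^ n))"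
  by (simp add: Ik_def)

lemma identity1:
  "X (T k) = SI (\<lambda>n. C ((-1)^n / fact n) * (V ^ n * Ik (n + k)))"
proof -
  let ?H = "\<lambda>n j. (C ((-1)^n / fact n) * V ^ n) * (C (1 / fact j) * (X (T (j + (n + k))) * V ^ j))"
  have "SI (\<lambda>n. C ((-1)^n / fact n) * (V ^ n * Ik (n + k))) = SI (\<lambda>n. SI (\<lambda>j. ?H n j))"
  proof (rule arg_cong[where f=SI], rule ext)
    fix n
    have "C ((-1)^n / fact n) * (V ^ n * Ik (n + k)) = (C ((-1)^n / fact n) * V ^ n) * Ik (n + k)"
      by (simp add: mult.assoc)
    also have "\<dots> = SI (\<lambda>j. ?H n j)"
      unfolding Ik_alt by (rule SI_mult_left[OF summ_Ik])
    finally show "C ((-1)^n / fact n) * (V ^ n * Ik (n + k)) = SI (\<lambda>j. ?H n j)" .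
  qed
  also have "\<dots> = SI (\<lambda>N. \<Sum>n\<le>N. ?H n (N - n))"
  proof (rule SI_double)
    fix n j
    show "VB (?H n j) (n + j)"
      by (intro VB_mult VB_C_mult VB_power V(1) VB_mult'[OF VB_0 VB_power[OF V(1)]]) simp
  qed
  also have "\<dots> = SI (\<lambda>N. if N = 0 then X (T k) else 0)"
  proof (rule arg_cong[where f=SI], rule ext)
    fix N
    have "(\<Sum>n\<le>N. ?H n (N - n)) = (\<Sum>n\<le>N. X (T (N + k)) * (fps_nth (E (- V)) n * fps_nth (E V) (N - n)))"
    proof (rule sum.cong)
      fix n assume "n \<in> {..N}"
      then have "N - n + (n + k) = N + k" by simp
      then show "?H n (N - n) = X (T (N + k)) * (fps_nth (E (- V)) n * fps_nth (E V) (N - n))"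
        unfolding C_sign by (simp add: E_def algebra_simps)
    qed simp
    also have "\<dots> = X (T (N + k)) * fps_nth (E (- V) * E V) N"
      by (simp add: fps_mult_nth sum_distrib_left atLeast0AtMost)
    also have "\<dots> = (if N = 0 then X (T k) else 0)" by (simp add: E_inv)
    finally show "(\<Sum>n\<le>N. ?H n (N - n)) = (if N = 0 then X (T k) else 0)" .
  qed
  also have "\<dots> = X (T k)" by (rule SI_single) simp
  finally show ?thesis ..
qed


definition ea :: "nat \<Rightarrow> rat" where "ea a = (-1/2) ^ a / fact a"
definition sb :: "nat \<Rightarrow> rat" where "sb b = 1 / of_nat (dfact (2*b+1))"

lemma dfact_odd_Suc: "dfact (2 * Suc b + 1) = (2 * Suc b + 1) * dfact (2*b+1)"
proof -
  have "2 * Suc b + 1 = Suc (Suc (2*b+1))" by simp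
  then show ?thesis by simp
qed

lemma dfact_pos: "dfact (2*b+1) > 0"
  by (induction b) (simp_all add: dfact_odd_Suc)

lemma sb_Suc: "sb (Suc b) * (2 * of_nat (Suc b) + 1) = sb b"
proof -
  have n: "(of_nat (2 * Suc b + 1) :: rat) \<noteq> 0" by (simp only: of_nat_eq_0_iff)
  have d: "(of_nat (dfact (2*b+1)) :: rat) \<noteq> 0" using dfact_pos[of b] by simp
  have gen: "\<And>x d::rat. x \<noteq> 0 \<Longrightarrow> 1/(x*d) * x = 1/d"
    by (case_tac "d = 0") (simp_all add: field_simps)
  have e: "(2 * of_nat (Suc b) + 1 :: rat) = of_nat (2 * Suc b + 1)" by simp
  have "sb (Suc b) = 1 / (of_nat (2 * Suc b + 1) * of_nat (dfact (2*b+1)))"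
    by (simp only: sb_def dfact_odd_Suc of_nat_mult)
  then show ?thesis unfolding e using gen[OF n] by (simp only: sb_def)
qed

lemma ea_Suc: "2 * of_nat (Suc a) * ea (Suc a) = - ea a"
proof -
  have n: "(of_nat (Suc a) :: rat) \<noteq> 0" by (simp only: of_nat_eq_0_iff)
  show ?thesis using n by (simp add: ea_def fact_Suc field_simps del: of_nat_Suc)
qed

lemma ratid0: "(\<Sum>a\<le>j. ea a * sb (j - a)) * (2 * of_nat j + 1) = ea j"
proof (cases j)
  case 0 then show ?thesis by (simp add: sb_def)
next
  case (Suc i)
  have split: "(\<Sum>a\<le>Suc i. ea a * sb (Suc i - a)) * (2 * of_nat (Suc i) + 1) =
     (\<Sum>a\<le>Suc i. ea a * (sb (Suc i - a) * (2 * of_nat (Suc i - a) + 1))) +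
     (\<Sum>a\<le>Suc i. 2 * of_nat a * ea a * sb (Suc i - a))"
    unfolding sum_distrib_right sum.distrib[symmetric]
    by (rule sum.cong) (auto simp: of_nat_diff algebra_simps)
  have s1: "(\<Sum>a\<le>Suc i. ea a * (sb (Suc i - a) * (2 * of_nat (Suc i - a) + 1))) =
      (\<Sum>a\<le>i. ea a * sb (i - a)) + ea (Suc i)"
  proof -
    have "(\<Sum>a\<le>i. ea a * (sb (Suc i - a) * (2 * of_nat (Suc i - a) + 1))) = (\<Sum>a\<le>i. ea a * sb (i - a))"
    proof (rule sum.cong)
      fix a assume "a \<in> {..i}"
      then have "Suc i - a = Suc (i - a)" by auto
      then show "ea a * (sb (Suc i - a) * (2 * of_nat (Suc i - a) + 1)) = ea a * sb (i - a)"
        using sb_Suc[of "i - a"] by simp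
    qed simp
    then show ?thesis by (simp add: sb_def)
  qed
  have s2: "(\<Sum>a\<le>Suc i. 2 * of_nat a * ea a * sb (Suc i - a)) = - (\<Sum>a\<le>i. ea a * sb (i - a))"
  proof -
    have "(\<Sum>a\<le>Suc i. 2 * of_nat a * ea a * sb (Suc i - a)) =
        (\<Sum>a\<le>i. 2 * of_nat (Suc a) * ea (Suc a) * sb (Suc i - Suc a))"
      by (subst sum.atMost_Suc_shift) simp
    also have "\<dots> = (\<Sum>a\<le>i. - (ea a * sb (i - a)))"
      by (rule sum.cong) (simp_all only: ea_Suc diff_Suc_Suc mult_minus_left)
    finally show ?thesis by (simp add: sum_negf)
  qed
  show ?thesis unfolding Suc split s1 s2 by simp
qed

definition g :: "nat \<Rightarrow> rat" where
  "g j = (-1) ^ j / (2 ^ j * fact j * of_nat (2*j+1))"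

lemma ratid: "(\<Sum>a\<le>j. 1 / fact a * (-1/2) ^ a * (1 / of_nat (dfact (2 * (j - a) + 1)))) = g j"
proof -
  have "(\<Sum>a\<le>j. 1 / fact a * (-1/2) ^ a * (1 / of_nat (dfact (2 * (j - a) + 1)))) = (\<Sum>a\<le>j. ea a * sb (j - a))"
    by (simp add: ea_def sb_def)
  also have "\<dots> = ea j / (2 * of_nat j + 1)"
    using ratid0[of j] by (simp add: field_simps)
  also have "\<dots> = g j"
  proof -
    have p: "(-1/2::rat)^j = (-1)^j / 2^j" by (metis power_divide)
    have n: "(2 * of_nat j + 1 :: rat) \<noteq> 0" by (metis of_nat_Suc of_nat_eq_0_iff of_nat_mult of_nat_numeral add.commute nat.distinct(1))
    show ?thesis using n unfolding ea_def g_def p by (simp add: field_simps)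
  qed
  finally show ?thesis .
qed


definition cc :: "nat \<Rightarrow> mf" where
  "cc n = (\<Sum>i\<le>n. C ((- 1) ^ (n + 1) / (2 ^ (n - i) * fact i * fact (n - i) * rat_of_nat (2 * n - 2 * i + 1))) *
                   (V ^ i * R ^ (2 * n - 2 * i + 1)))"

definition G :: "mf fps" where "G = Abs_fps (\<lambda>j. C (g j) * R ^ (2*j+1))"
definition Sf :: "mf fps" where "Sf = Abs_fps (\<lambda>b. C (1 / of_nat (dfact (2*b+1))) * R ^ (2*b+1))"
definition Bf :: "mf fps" where "Bf = Abs_fps (\<lambda>m. Bs m V R)"

lemma ratc: assumes "i \<le> n"
  shows "((- 1) ^ (n + 1) / (2 ^ (n - i) * fact i * fact (n - i) * rat_of_nat (2 * n - 2 * i + 1))) =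
         - (1 / fact i * (-1) ^ i * g (n - i))"
proof -
  obtain j where n: "n = i + j" using assms le_iff_add by blast
  have e: "2 * (i + j) - 2 * i + 1 = 2 * j + 1" by simp
  show ?thesis unfolding n e g_def by (simp add: power_add field_simps)
qed

lemma Cc_eq: "Abs_fps cc = - (E (- V) * G)"
proof (rule fps_ext)
  fix n
  have "cc n = (\<Sum>i\<le>n. - (fps_nth (E (- V)) i * fps_nth G (n - i)))"
    unfolding cc_def
  proof (rule sum.cong)
    fix i assume i: "i \<in> {..n}"
    then have e: "2 * n - 2 * i + 1 = 2 * (n - i) + 1" by auto
    have "C ((- 1) ^ (n + 1) / (2 ^ (n - i) * fact i * fact (n - i) * rat_of_nat (2 * n - 2 * i + 1)))
        = - (C (1 / fact i) * (-1) ^ i * C (g (n - i)))"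
      using i by (simp only: ratc C_mult C_uminus C_power C_1 atMost_iff)
    then show "C ((- 1) ^ (n + 1) / (2 ^ (n - i) * fact i * fact (n - i) * rat_of_nat (2 * n - 2 * i + 1))) *
                   (V ^ i * R ^ (2 * n - 2 * i + 1)) = - (fps_nth (E (- V)) i * fps_nth G (n - i))"
      unfolding e by (simp add: E_def G_def power_minus[of V] algebra_simps)
  qed simp
  then show "fps_nth (Abs_fps cc) n = fps_nth (- (E (- V) * G)) n"
    by (simp add: fps_mult_nth atLeast0AtMost sum_negf)
qed

lemma Bf_eq: "Bf = E V * Sf"
proof (rule fps_ext)
  fix m
  have "Bs m V R = (\<Sum>i\<le>m. fps_nth (E V) i * fps_nth Sf (m - i))"
    unfolding Bs_def
  proof (rule sum.cong)
    fix i assume i: "i \<in> {..m}"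
    then have e: "2 * m - 2 * i + 1 = 2 * (m - i) + 1" by auto
    have "C (1 / (of_nat (fact i) * of_nat (dfact (2 * m - 2 * i + 1)))) =
          C (1 / fact i) * C (1 / of_nat (dfact (2 * (m - i) + 1)))"
      unfolding e by (simp add: C_mult[symmetric])
    then show "C (1 / (of_nat (fact i) * of_nat (dfact (2 * m - 2 * i + 1)))) * (V ^ i * R ^ (2 * m - 2 * i + 1)) =
       fps_nth (E V) i * fps_nth Sf (m - i)"
      unfolding e by (simp add: E_def Sf_def algebra_simps)
  qed simp
  then show "fps_nth Bf m = fps_nth (E V * Sf) m"
    by (simp add: Bf_def fps_mult_nth atLeast0AtMost)
qed

lemma G_eq: "G = E (- (C (1/2) * R ^ 2)) * Sf"
proof (rule fps_ext)
  fix j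
  have "fps_nth (E (- (C (1/2) * R ^ 2)) * Sf) j =
     (\<Sum>a\<le>j. C (1 / fact a * (-1/2) ^ a * (1 / of_nat (dfact (2 * (j - a) + 1)))) * R ^ (2 * j + 1))"
    unfolding fps_mult_nth atLeast0AtMost
  proof (rule sum.cong)
    fix a assume a: "a \<in> {..j}"
    then have e: "2 * a + (2 * (j - a) + 1) = 2 * j + 1" by auto
    have p: "(- (C (1/2) * R ^ 2)) ^ a = C ((-1/2) ^ a) * R ^ (2 * a)"
    proof -
      have "- (C (1/2) * R ^ 2) = C (-1/2) * R ^ 2" by (simp add: C_uminus)
      then show ?thesis by (simp add: power_mult_distrib C_power power_mult)
    qed
    show "fps_nth (E (- (C (1/2) * R ^ 2))) a * fps_nth Sf (j - a) =
       C (1 / fact a * (-1/2) ^ a * (1 / of_nat (dfact (2 * (j - a) + 1)))) * R ^ (2 * j + 1)"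
      unfolding E_def Sf_def fps_nth_Abs_fps p C_mult e[symmetric] power_add
      by (simp add: algebra_simps)
  qed simp
  also have "\<dots> = C (g j) * R ^ (2 * j + 1)"
    by (simp only: sum_distrib_right[symmetric] C_sum[symmetric] ratid)
  finally show "fps_nth G j = fps_nth (E (- (C (1/2) * R ^ 2)) * Sf) j"
    by (simp add: G_def)
qed

lemma key: "Abs_fps cc * E V + E (- W V R) * Bf = 0"
proof -
  have "Abs_fps cc * E V + E (- W V R) * Bf = - ((E (- V) * E V) * G) + (E (- W V R) * E V) * Sf"
    by (simp add: Cc_eq Bf_eq algebra_simps)
  also have "\<dots> = - G + E (- (C (1/2) * R ^ 2)) * Sf"
    by (simp add: E_inv E_mult W_def E_0)
  also have "\<dots> = 0" by (simp add: G_eq)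
  finally show ?thesis .
qed


lemma VB_cc: "VB (cc n) n"
  unfolding cc_def
proof (rule VB_sum)
  fix i assume "i \<in> {..n}"
  then have "n \<le> i + (2*n - 2*i + 1)" by auto
  then show "VB (C ((- 1) ^ (n + 1) / (2 ^ (n - i) * fact i * fact (n - i) * rat_of_nat (2 * n - 2 * i + 1))) *
                   (V ^ i * R ^ (2 * n - 2 * i + 1))) n"
    by (intro VB_C_mult VB_mult'[OF VB_power[OF V(1)] VB_power[OF R(1)]])
qed

lemma VB_e: "VB (C ((-1)^n / fact n) * W V R ^ n) n"
  by (intro VB_C_mult VB_power VB_W V(1) R(1))

lemma VB_J1: "VB (X (T (m + k + 1)) * Bs m V R) m"
  by (rule VB_mult'[OF VB_X VB_Bs[OF V(1) R(1)]]) simp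

lemma VB_J2: "VB (C (1 / fact m) * (X (S (m + k)) * W V R ^ m)) m"
  by (intro VB_C_mult VB_mult'[OF VB_0 VB_power[OF VB_W[OF V(1) R(1)]]]) simp

lemma summ_J1: "summ (\<lambda>m. X (T (m + k + 1)) * Bs m V R)"
  unfolding summ_def using VB_J1 by blast

lemma summ_J2: "summ (\<lambda>m. C (1 / fact m) * (X (S (m + k)) * W V R ^ m))"
  unfolding summ_def using VB_J2 by blast

lemma Jk_alt: "Jk k = SI (\<lambda>n. X (T (n + k + 1)) * Bs n V R) + SI (\<lambda>n. C (1 / fact n) * (X (S (n + k)) * W V R ^ n))"
  by (simp add: Jk_def)

lemma e_nth: "C ((-1)^n / fact n) * W V R ^ n = fps_nth (E (- W V R)) n"
  by (simp add: C_sign E_def)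

lemma termA: "SI (\<lambda>n. cc n * Ik (n+k+1)) = SI (\<lambda>N. X (T (N+k+1)) * fps_nth (Abs_fps cc * E V) N)"
proof -
  let ?H = "\<lambda>n j. cc n * (C (1 / fact j) * (X (T (j + (n+k+1))) * V ^ j))"
  have "SI (\<lambda>n. cc n * Ik (n+k+1)) = SI (\<lambda>n. SI (\<lambda>j. ?H n j))"
    unfolding Ik_alt by (simp only: SI_mult_left[OF summ_Ik])
  also have "\<dots> = SI (\<lambda>N. \<Sum>n\<le>N. ?H n (N - n))"
  proof (rule SI_double)
    fix n j show "VB (?H n j) (n + j)"
      by (intro VB_mult VB_cc VB_C_mult VB_mult'[OF VB_0 VB_power[OF V(1)]]) simp
  qed
  also have "\<dots> = SI (\<lambda>N. X (T (N+k+1)) * fps_nth (Abs_fps cc * E V) N)"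
  proof (rule arg_cong[where f=SI], rule ext)
    fix N
    have "(\<Sum>n\<le>N. ?H n (N - n)) = (\<Sum>n\<le>N. X (T (N+k+1)) * (cc n * fps_nth (E V) (N - n)))"
    proof (rule sum.cong)
      fix n assume "n \<in> {..N}"
      then have "N - n + (n + k + 1) = N + k + 1" by simp
      then show "?H n (N - n) = X (T (N+k+1)) * (cc n * fps_nth (E V) (N - n))"
        by (simp add: E_def algebra_simps)
    qed simp
    also have "\<dots> = X (T (N+k+1)) * fps_nth (Abs_fps cc * E V) N"
      by (simp add: fps_mult_nth sum_distrib_left atLeast0AtMost)
    finally show "(\<Sum>n\<le>N. ?H n (N - n)) = X (T (N+k+1)) * fps_nth (Abs_fps cc * E V) N" .
  qed
  finally show ?thesis .
qed

lemma termB: "SI (\<lambda>n. C ((-1)^n / fact n) * (W V R ^ n * Jk (n+k))) =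
   SI (\<lambda>N. X (T (N+k+1)) * fps_nth (E (- W V R) * Bf) N) + X (S k)"
proof -
  let ?e = "\<lambda>n. C ((-1)^n / fact n) * W V R ^ n"
  let ?H1 = "\<lambda>n m. ?e n * (X (T (m + (n+k) + 1)) * Bs m V R)"
  let ?H2 = "\<lambda>n m. ?e n * (C (1 / fact m) * (X (S (m + (n+k))) * W V R ^ m))"
  have "SI (\<lambda>n. C ((-1)^n / fact n) * (W V R ^ n * Jk (n+k))) =
        SI (\<lambda>n. SI (\<lambda>m. ?H1 n m) + SI (\<lambda>m. ?H2 n m))"
  proof (rule arg_cong[where f=SI], rule ext)
    fix n
    have "C ((-1)^n / fact n) * (W V R ^ n * Jk (n+k)) = ?e n * Jk (n+k)" by (simp add: mult.assoc)
    also have "\<dots> = SI (\<lambda>m. ?H1 n m) + SI (\<lambda>m. ?H2 n m)"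
      unfolding Jk_alt distrib_left by (simp only: SI_mult_left[OF summ_J1] SI_mult_left[OF summ_J2])
    finally show "C ((-1)^n / fact n) * (W V R ^ n * Jk (n+k)) = SI (\<lambda>m. ?H1 n m) + SI (\<lambda>m. ?H2 n m)" .
  qed
  also have "\<dots> = SI (\<lambda>n. SI (\<lambda>m. ?H1 n m)) + SI (\<lambda>n. SI (\<lambda>m. ?H2 n m))"
    by (rule SI_add)
  also have "SI (\<lambda>n. SI (\<lambda>m. ?H1 n m)) = SI (\<lambda>N. \<Sum>n\<le>N. ?H1 n (N - n))"
    by (rule SI_double) (rule VB_mult[OF VB_e VB_J1])
  also have "\<dots> = SI (\<lambda>N. X (T (N+k+1)) * fps_nth (E (- W V R) * Bf) N)"
  proof (rule arg_cong[where f=SI], rule ext)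
    fix N
    have "(\<Sum>n\<le>N. ?H1 n (N - n)) = (\<Sum>n\<le>N. X (T (N+k+1)) * (fps_nth (E (- W V R)) n * fps_nth Bf (N - n)))"
    proof (rule sum.cong)
      fix n assume "n \<in> {..N}"
      then have "N - n + (n + k) + 1 = N + k + 1" by simp
      then show "?H1 n (N - n) = X (T (N+k+1)) * (fps_nth (E (- W V R)) n * fps_nth Bf (N - n))"
        unfolding e_nth by (simp add: Bf_def algebra_simps)
    qed simp
    also have "\<dots> = X (T (N+k+1)) * fps_nth (E (- W V R) * Bf) N"
      by (simp add: fps_mult_nth sum_distrib_left atLeast0AtMost)
    finally show "(\<Sum>n\<le>N. ?H1 n (N - n)) = X (T (N+k+1)) * fps_nth (E (- W V R) * Bf) N" .
  qed
  also have "SI (\<lambda>n. SI (\<lambda>m. ?H2 n m)) = SI (\<lambda>N. \<Sum>n\<le>N. ?H2 n (N - n))"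
    by (rule SI_double) (rule VB_mult[OF VB_e VB_J2])
  also have "\<dots> = SI (\<lambda>N. if N = 0 then X (S k) else 0)"
  proof (rule arg_cong[where f=SI], rule ext)
    fix N
    have "(\<Sum>n\<le>N. ?H2 n (N - n)) = (\<Sum>n\<le>N. X (S (N+k)) * (fps_nth (E (- W V R)) n * fps_nth (E (W V R)) (N - n)))"
    proof (rule sum.cong)
      fix n assume "n \<in> {..N}"
      then have "N - n + (n + k) = N + k" by simp
      then show "?H2 n (N - n) = X (S (N+k)) * (fps_nth (E (- W V R)) n * fps_nth (E (W V R)) (N - n))"
        unfolding e_nth by (simp add: E_def algebra_simps)
    qed simp
    also have "\<dots> = X (S (N+k)) * fps_nth (E (- W V R) * E (W V R)) N"
      by (simp add: fps_mult_nth sum_distrib_left atLeast0AtMost)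
    also have "\<dots> = (if N = 0 then X (S k) else 0)" by (simp add: E_inv)
    finally show "(\<Sum>n\<le>N. ?H2 n (N - n)) = (if N = 0 then X (S k) else 0)" .
  qed
  also have "\<dots> = X (S k)" by (rule SI_single) simp
  finally show ?thesis .
qed

lemma identity2:
  "X (S k) = SI (\<lambda>n. cc n * Ik (n+k+1)) + SI (\<lambda>n. C ((-1)^n / fact n) * (W V R ^ n * Jk (n+k)))"
proof -
  have "SI (\<lambda>n. cc n * Ik (n+k+1)) + SI (\<lambda>n. C ((-1)^n / fact n) * (W V R ^ n * Jk (n+k))) =
     (SI (\<lambda>N. X (T (N+k+1)) * fps_nth (Abs_fps cc * E V) N) +
      SI (\<lambda>N. X (T (N+k+1)) * fps_nth (E (- W V R) * Bf) N)) + X (S k)"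
    unfolding termA termB by (simp only: add.assoc)
  also have "SI (\<lambda>N. X (T (N+k+1)) * fps_nth (Abs_fps cc * E V) N) +
      SI (\<lambda>N. X (T (N+k+1)) * fps_nth (E (- W V R) * Bf) N) =
      SI (\<lambda>N. X (T (N+k+1)) * fps_nth (Abs_fps cc * E V + E (- W V R) * Bf) N)"
    by (simp only: SI_add[symmetric] distrib_left fps_add_nth)
  also have "\<dots> = 0" by (simp add: key SI_zero)
  finally show ?thesis by simp
qed


theorem lemma2p2:
  fixes k :: nat
  shows "mvar (T k) =
           msuminf (\<lambda>n. msc ((-1)^n / of_nat (fact n)) (mmul (mpow (II 0) n) (II (n+k)))) \<and>
         mvar (S k) =
           madd (msuminf (\<lambda>n. mmul
                  (mfsum (\<lambda>i. msc ((-1)^(n+1) /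
                        (2^(n-i) * of_nat (fact i) * of_nat (fact (n-i)) * of_nat (2*n - 2*i + 1)))
                        (mmul (mpow (II 0) i) (mpow (JJ 0) (2*n - 2*i + 1)))) {..n})
                  (II (n+k+1))))
                (msuminf (\<lambda>n. msc ((-1)^n / of_nat (fact n))
                  (mmul (mpow (madd (II 0) (msc (1/2) (mpow (JJ 0) 2))) n) (JJ (n+k)))))"
proof
  have s: "summ (\<lambda>n. C ((-1)^n / fact n) * (V ^ n * Ik (n + k)))"
    unfolding summ_def by (intro allI VB_C_mult VB_mult'[OF VB_power[OF V(1)] VB_0]) simp
  show "mvar (T k) =
           msuminf (\<lambda>n. msc ((-1)^n / of_nat (fact n)) (mmul (mpow (II 0) n) (II (n+k))))"
    by (simp only: II_tr Ik0 tr MF_coef of_nat_fact msuminf_SI[OF s] identity1[symmetric])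
next
  have sA: "summ (\<lambda>n. cc n * Ik (n+k+1))"
    unfolding summ_def by (intro allI VB_mult'[OF VB_cc VB_0]) simp
  have sB: "summ (\<lambda>n. C ((-1)^n / fact n) * (W V R ^ n * Jk (n+k)))"
    unfolding summ_def by (intro allI VB_C_mult VB_mult'[OF VB_power[OF VB_W[OF V(1) R(1)]] VB_0]) simp
  show "mvar (S k) =
           madd (msuminf (\<lambda>n. mmul
                  (mfsum (\<lambda>i. msc ((-1)^(n+1) /
                        (2^(n-i) * of_nat (fact i) * of_nat (fact (n-i)) * of_nat (2*n - 2*i + 1)))
                        (mmul (mpow (II 0) i) (mpow (JJ 0) (2*n - 2*i + 1)))) {..n})
                  (II (n+k+1))))
                (msuminf (\<lambda>n. msc ((-1)^n / of_nat (fact n))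
                  (mmul (mpow (madd (II 0) (msc (1/2) (mpow (JJ 0) 2))) n) (JJ (n+k)))))"
    by (simp only: II_tr Ik0 JJ_tr Jk0 tr MF_coef of_nat_fact W_def[symmetric] cc_def[symmetric]
          msuminf_SI[OF sA] msuminf_SI[OF sB] identity2[symmetric])
qed


end
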